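(* Let $X$ be a $T_1$ topological space. An ideal $I$ of $T''(X)$ is a $z$-ideal if and only if for all $f\in T''(X)$ and $g\in I$ with $Z(f)=Z(g)$ we have $f\in I$.
   Context: $C(X)$ is the ring of real-valued continuous functions on $X$; a cozero set is a set $\{x: g(x)\neq 0\}$ with $g\in C(X)$. $T''(X)$ is the ring (under pointwise operations) of all functions $f\colon X\to\mathbb{R}$ for which there is a dense cozero set $U$ of $X$ with $f|_U$ continuous. For any $f\colon X\to\mathbb{R}$, $Z(f)=\{x\in X: f(x)=0\}$. In a commutative ring $R$ with unity, $M(a)$ denotes the intersection of all maximal ideals of $R$ containing $a$, and an ideal $I$ is a $z$-ideal if $M(a)\subseteq I$ for every $a\in I$. *)

theory Defs
  imports "HOL-Analysis.Analysis" "HOL-Algebra.Ideal"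
begin

definition cozero_set :: "('a::topological_space) set \<Rightarrow> bool" where
  "cozero_set U \<longleftrightarrow> (\<exists>g::'a \<Rightarrow> real. continuous_on UNIV g \<and> U = {x. g x \<noteq> 0})"

definition Tpp :: "('a::topological_space \<Rightarrow> real) set" where
  "Tpp = {f. \<exists>U. cozero_set U \<and> closure U = UNIV \<and> continuous_on U f}"

definition Tpp_ring :: "('a::topological_space \<Rightarrow> real) ring" where
  "Tpp_ring = \<lparr>carrier = Tpp, monoid.mult = (\<lambda>f g x. f x * g x), one = (\<lambda>x. 1),
               zero = (\<lambda>x. 0), add = (\<lambda>f g x. f x + g x)\<rparr>"

definition Zset :: "('a \<Rightarrow> real) \<Rightarrow> 'a set" where
  "Zset f = {x. f x = 0}"

definition Mset :: "('b, 'c) ring_scheme \<Rightarrow> 'b \<Rightarrow> 'b set" where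
  "Mset R a = carrier R \<inter> \<Inter>{M. maximalideal M R \<and> a \<in> M}"

definition z_ideal :: "('b, 'c) ring_scheme \<Rightarrow> 'b set \<Rightarrow> bool" where
  "z_ideal R I \<longleftrightarrow> ideal I R \<and> (\<forall>a\<in>I. Mset R a \<subseteq> I)"

end

theory Submission
  imports Defs
begin

lemma R_simps:
  "carrier Tpp_ring = Tpp" "a \<otimes>\<^bsub>Tpp_ring\<^esub> b = (\<lambda>x. a x * b x)"
  "\<one>\<^bsub>Tpp_ring\<^esub> = (\<lambda>x. 1)" "\<zero>\<^bsub>Tpp_ring\<^esub> = (\<lambda>x. 0)"
  "a \<oplus>\<^bsub>Tpp_ring\<^esub> b = (\<lambda>x. a x + b x)"
  by (simp_all add: Tpp_ring_def)

lemma const_Tpp: "(\<lambda>x. c) \<in> Tpp"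
proof -
  have "cozero_set (UNIV::'a set)"
    unfolding cozero_set_def by (rule exI[of _ "\<lambda>x. 1"]) auto
  then show ?thesis unfolding Tpp_def
    by (intro CollectI exI[of _ UNIV]) auto
qed

lemma inv_Tpp: assumes "k \<in> Tpp" "\<forall>x. k x \<noteq> 0" shows "(\<lambda>x. 1 / k x) \<in> Tpp"
proof -
  obtain U where U: "cozero_set U" "closure U = UNIV" "continuous_on U k"
    using assms(1) unfolding Tpp_def by auto
  have "continuous_on U (\<lambda>x. 1 / k x)"
    using U(3) assms(2) by (intro continuous_intros) auto
  then show ?thesis using U unfolding Tpp_def by auto
qed

lemma cring_R: assumes "ring (Tpp_ring :: ('a::topological_space \<Rightarrow> real) ring)"
  shows "cring (Tpp_ring :: ('a \<Rightarrow> real) ring)"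
proof -
  interpret ring "Tpp_ring :: ('a \<Rightarrow> real) ring" by fact
  show ?thesis
    apply (intro cring.intro assms comm_monoid.intro is_monoid comm_monoid_axioms.intro)
    apply (simp add: R_simps mult.commute)
    done
qed

lemma Mx_max:
  assumes "ring (Tpp_ring :: ('a::topological_space \<Rightarrow> real) ring)"
  shows "maximalideal {f\<in>Tpp. f x = 0} (Tpp_ring :: ('a \<Rightarrow> real) ring)"
proof -
  interpret ring "Tpp_ring :: ('a \<Rightarrow> real) ring" by fact
  let ?M = "{f\<in>Tpp. f x = 0} :: ('a \<Rightarrow> real) set"
  have negx: "(\<ominus>\<^bsub>Tpp_ring\<^esub> a) x = - a x" if "a \<in> Tpp" for a :: "'a \<Rightarrow> real"
  proof -
    have aC: "a \<in> carrier Tpp_ring" using that by (simp add: R_simps(1))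
    have "a \<oplus>\<^bsub>Tpp_ring\<^esub> (\<ominus>\<^bsub>Tpp_ring\<^esub> a) = \<zero>\<^bsub>Tpp_ring\<^esub>"
      using aC by (rule r_neg)
    then have "a x + (\<ominus>\<^bsub>Tpp_ring\<^esub> a) x = 0" by (simp add: R_simps) (metis)
    then show ?thesis by simp
  qed
  have id: "ideal ?M Tpp_ring"
  proof (rule idealI[OF assms])
    show "subgroup ?M (add_monoid Tpp_ring)"
    proof (rule subgroup.intro)
      show "?M \<subseteq> carrier (add_monoid Tpp_ring)" by (auto simp: R_simps)
    next
      fix a b assume a: "a \<in> ?M" and b: "b \<in> ?M"
      have "a \<oplus>\<^bsub>Tpp_ring\<^esub> b \<in> carrier Tpp_ring" using a b by (intro a_closed) (auto simp: R_simps)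
      then show "a \<otimes>\<^bsub>add_monoid Tpp_ring\<^esub> b \<in> ?M" using a b by (simp add: R_simps)
    next
      show "\<one>\<^bsub>add_monoid Tpp_ring\<^esub> \<in> ?M" using const_Tpp by (simp add: R_simps)
    next
      fix a assume a: "a \<in> ?M"
      have "\<ominus>\<^bsub>Tpp_ring\<^esub> a \<in> carrier Tpp_ring" using a by (intro a_inv_closed) (auto simp: R_simps)
      then have "\<ominus>\<^bsub>Tpp_ring\<^esub> a \<in> ?M" using a negx by (simp add: R_simps)
      then show "inv\<^bsub>add_monoid Tpp_ring\<^esub> a \<in> ?M" by (simp add: a_inv_def)
    qed
  qed (auto simp: R_simps intro: m_closed[simplified R_simps])
  show ?thesis
  proof (rule maximalidealI[OF id])
    show "carrier Tpp_ring \<noteq> ?M" using const_Tpp[of 1] by (auto simp: R_simps)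
  next
    fix J assume J: "ideal J Tpp_ring" "?M \<subseteq> J" "J \<subseteq> carrier Tpp_ring"
    interpret J: ideal J Tpp_ring by fact
    show "J = ?M \<or> J = carrier Tpp_ring"
    proof (cases "J \<subseteq> ?M")
      case True then show ?thesis using J by auto
    next
      case False
      then obtain h where h: "h \<in> J" "h x \<noteq> 0" using J by (auto simp: R_simps)
      have hT: "h \<in> Tpp" using h J by (auto simp: R_simps)
      have "carrier Tpp_ring \<subseteq> J"
      proof
        fix g :: "'a \<Rightarrow> real" assume g: "g \<in> carrier Tpp_ring"
        define c where "c = g x / h x"
        have cT: "(\<lambda>y. c) \<in> carrier Tpp_ring" using const_Tpp by (simp add: R_simps)
        have ch: "(\<lambda>y. c) \<otimes>\<^bsub>Tpp_ring\<^esub> h \<in> J" using J.I_l_closed[OF h(1) cT] .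
        have chC: "(\<lambda>y. c) \<otimes>\<^bsub>Tpp_ring\<^esub> h \<in> carrier Tpp_ring" using cT hT by (intro m_closed) (simp_all add: R_simps(1))
        define k where "k = g \<ominus>\<^bsub>Tpp_ring\<^esub> ((\<lambda>y. c) \<otimes>\<^bsub>Tpp_ring\<^esub> h)"
        have kC: "k \<in> carrier Tpp_ring" unfolding k_def using g chC by simp
        have eq: "k \<oplus>\<^bsub>Tpp_ring\<^esub> ((\<lambda>y. c) \<otimes>\<^bsub>Tpp_ring\<^esub> h) = g"
          unfolding k_def using g chC by (simp add: a_minus_def a_assoc l_neg)
        then have "k x + c * h x = g x" by (simp add: R_simps) (metis)
        then have "k x = 0" using h(2) by (simp add: c_def)
        then have "k \<in> J" using kC J(2) by (auto simp: R_simps)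
        then show "g \<in> J" using eq ch J.a_closed by metis
      qed
      then show ?thesis using J by auto
    qed
  qed
qed

theorem theorem5p01:
  fixes I :: "('a::t1_space \<Rightarrow> real) set"
  assumes "ideal I Tpp_ring"
  shows "z_ideal Tpp_ring I \<longleftrightarrow>
           (\<forall>f\<in>Tpp. \<forall>g\<in>I. Zset f = Zset g \<longrightarrow> f \<in> I)"
proof -
  interpret ideal I Tpp_ring by fact
  have rR: "ring (Tpp_ring :: ('a \<Rightarrow> real) ring)" by (rule ring_axioms)
  interpret cring "Tpp_ring :: ('a \<Rightarrow> real) ring" using cring_R[OF rR] .
  show ?thesis
  proof
    assume z: "z_ideal Tpp_ring I"
    show "\<forall>f\<in>Tpp. \<forall>g\<in>I. Zset f = Zset g \<longrightarrow> f \<in> I"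
    proof (intro ballI impI)
      fix f g assume f: "f \<in> Tpp" and g: "g \<in> I" and Z: "Zset f = Zset g"
      have fC: "f \<in> carrier Tpp_ring" using f by (simp add: R_simps)
      have "f \<in> Mset Tpp_ring g"
        unfolding Mset_def
      proof (intro IntI InterI)
        show "f \<in> carrier Tpp_ring" by (rule fC)
        fix M assume "M \<in> {M. maximalideal M Tpp_ring \<and> g \<in> M}"
        then have Mm: "maximalideal M Tpp_ring" and gM: "g \<in> M" by auto
        interpret M: maximalideal M Tpp_ring by (rule Mm)
        show "f \<in> M"
        proof (rule ccontr)
          assume fM: "f \<notin> M"
          let ?J = "M <+>\<^bsub>Tpp_ring\<^esub> PIdl\<^bsub>Tpp_ring\<^esub> f"
          have Jid: "ideal ?J Tpp_ring"
            by (rule add_ideals[OF M.is_ideal cgenideal_ideal[OF fC]])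
          have MJ: "M \<subseteq> ?J"
          proof
            fix m assume m: "m \<in> M"
            then have mC: "m \<in> carrier Tpp_ring" by (rule M.Icarr)
            have "m = m \<oplus>\<^bsub>Tpp_ring\<^esub> (\<zero>\<^bsub>Tpp_ring\<^esub> \<otimes>\<^bsub>Tpp_ring\<^esub> f)"
              using mC fC by simp
            then show "m \<in> ?J" unfolding set_add_def' cgenideal_def using m by blast
          qed
          have fJ: "f \<in> ?J"
          proof -
            have "f = \<zero>\<^bsub>Tpp_ring\<^esub> \<oplus>\<^bsub>Tpp_ring\<^esub> (\<one>\<^bsub>Tpp_ring\<^esub> \<otimes>\<^bsub>Tpp_ring\<^esub> f)"
              using fC by simp
            then show ?thesis unfolding set_add_def' cgenideal_def
              using M.additive_subgroup_axioms additive_subgroup.zero_closed by blast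
          qed
          have Jc: "?J \<subseteq> carrier Tpp_ring" using ideal.Icarr[OF Jid] by blast
          from M.I_maximal[OF Jid MJ Jc] fM fJ have "?J = carrier Tpp_ring" by auto
          then have "\<one>\<^bsub>Tpp_ring\<^esub> \<in> ?J" by simp
          then obtain m r where m: "m \<in> M" and r: "r \<in> carrier Tpp_ring"
            and e1: "\<one>\<^bsub>Tpp_ring\<^esub> = m \<oplus>\<^bsub>Tpp_ring\<^esub> (r \<otimes>\<^bsub>Tpp_ring\<^esub> f)"
            unfolding set_add_def' cgenideal_def by blast
          have eq: "m x + r x * f x = 1" for x
            using e1 by (simp add: R_simps fun_eq_iff)
          have mC: "m \<in> carrier Tpp_ring" using m by (rule M.Icarr)
          have gC: "g \<in> carrier Tpp_ring" using gM by (rule M.Icarr)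
          define s where "s = m \<otimes>\<^bsub>Tpp_ring\<^esub> m \<oplus>\<^bsub>Tpp_ring\<^esub> g \<otimes>\<^bsub>Tpp_ring\<^esub> g"
          have sM: "s \<in> M" unfolding s_def
            using M.I_l_closed[OF m mC] M.I_l_closed[OF gM gC] M.a_closed by blast
          have sC: "s \<in> carrier Tpp_ring" using sM by (rule M.Icarr)
          have nz: "\<forall>x. s x \<noteq> 0"
          proof
            fix x
            have sx: "s x = m x * m x + g x * g x" by (simp add: s_def R_simps)
            show "s x \<noteq> 0"
            proof
              assume "s x = 0"
              then have "m x = 0" "g x = 0" using sx
                by (smt (verit) zero_le_square mult_eq_0_iff)+
              moreover then have "f x = 0" using Z by (auto simp: Zset_def)
              ultimately show False using eq[of x] by simp
            qed
          qed
          have iC: "(\<lambda>x. 1 / s x) \<in> carrier Tpp_ring"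
            using inv_Tpp[OF sC[unfolded R_simps] nz] by (simp add: R_simps)
          have "(\<lambda>x. 1 / s x) \<otimes>\<^bsub>Tpp_ring\<^esub> s \<in> M" by (rule M.I_l_closed[OF sM iC])
          moreover have "(\<lambda>x. 1 / s x) \<otimes>\<^bsub>Tpp_ring\<^esub> s = \<one>\<^bsub>Tpp_ring\<^esub>"
            using nz by (simp add: R_simps fun_eq_iff)
          ultimately have "M = carrier Tpp_ring" using M.one_imp_carrier by simp
          then show False using M.I_notcarr by simp
        qed
      qed
      then show "f \<in> I" using z g unfolding z_ideal_def by auto
    qed
  next
    assume c: "\<forall>f\<in>Tpp. \<forall>g\<in>I. Zset f = Zset g \<longrightarrow> f \<in> I"
    show "z_ideal Tpp_ring I" unfolding z_ideal_def
    proof (intro conjI ballI subsetI)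
      show "ideal I Tpp_ring" by fact
      fix a b assume a: "a \<in> I" and b: "b \<in> Mset Tpp_ring a"
      have bC: "b \<in> carrier Tpp_ring" using b by (simp add: Mset_def)
      have bM: "\<And>M. maximalideal M Tpp_ring \<Longrightarrow> a \<in> M \<Longrightarrow> b \<in> M"
        using b by (auto simp: Mset_def)
      have aC: "a \<in> carrier Tpp_ring" using a by (rule Icarr)
      have sub: "Zset a \<subseteq> Zset b"
      proof
        fix x assume "x \<in> Zset a"
        then have "a \<in> {f\<in>Tpp. f x = 0}" using aC by (simp add: Zset_def R_simps)
        then have "b \<in> {f\<in>Tpp. f x = 0}" using bM Mx_max[OF rR] by blast
        then show "x \<in> Zset b" by (simp add: Zset_def)
      qed
      have ab: "a \<otimes>\<^bsub>Tpp_ring\<^esub> b \<in> I" by (rule I_r_closed[OF a bC])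
      have "Zset b = Zset (a \<otimes>\<^bsub>Tpp_ring\<^esub> b)" using sub by (auto simp: Zset_def R_simps)
      then show "b \<in> I" using c bC ab by (auto simp: R_simps)
    qed
  qed
qed

end
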